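(* Let $N\ge2$ and let $v_1,\dots,v_N\in\mathbb{R}^3\setminus\{0\}$ satisfy $v_i/\|v_i\|\neq\pm v_j/\|v_j\|$ for $i\neq j$, and let $K=D_{v_1}+\dots+D_{v_N}$. For each $i$ let $q_i^+$ (resp. $q_i^-$) be the unique point of $\sum_{j\neq i}D_{v_j}$ maximizing (resp. minimizing) $\langle\cdot,v_i\rangle$; the $2N$ discs $D_{v_i}+\{q_i^\pm\}$ lie in $\partial K$. Let $\mathcal{S}:=\partial K\setminus\bigcup_{i=1}^N\big((D_{v_i}+\{q_i^+\})\cup(D_{v_i}+\{q_i^-\})\big)$. Then $\mathcal{S}$ has exactly two connected components if and only if $v_1,\dots,v_N$ lie in a common plane through the origin. Otherwise $\mathcal{S}$ is connected and the $2N$ boundary discs are pairwise disjoint.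
   Context: For $v\in\mathbb{R}^3$, $D_v$ denotes the closed disc in the plane $v^\perp$ centered at $0$ of radius $\|v\|$. Sums are Minkowski sums; a finite Minkowski sum of such discs is called a discotope. *)

theory Defs
  imports "HOL-Analysis.Analysis"
begin

definition disc :: "real^3 \<Rightarrow> (real^3) set" where
  "disc v = {x. x \<bullet> v = 0 \<and> norm x \<le> norm v}"

definition disc_sum :: "(nat \<Rightarrow> real^3) \<Rightarrow> nat set \<Rightarrow> (real^3) set" where
  "disc_sum v J = {x. \<exists>y. (\<forall>j\<in>J. y j \<in> disc (v j)) \<and> x = (\<Sum>j\<in>J. y j)}"

definition discotope :: "(nat \<Rightarrow> real^3) \<Rightarrow> nat \<Rightarrow> (real^3) set" where
  "discotope v N = disc_sum v {..<N}"

definition q_pt :: "(nat \<Rightarrow> real^3) \<Rightarrow> nat \<Rightarrow> nat \<Rightarrow> bool \<Rightarrow> real^3" where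
  "q_pt v N i s = (THE q. q \<in> disc_sum v ({..<N} - {i}) \<and>
      (\<forall>x\<in>disc_sum v ({..<N} - {i}).
         (if s then x \<bullet> v i \<le> q \<bullet> v i else q \<bullet> v i \<le> x \<bullet> v i)))"

definition bdisc :: "(nat \<Rightarrow> real^3) \<Rightarrow> nat \<Rightarrow> nat \<Rightarrow> bool \<Rightarrow> (real^3) set" where
  "bdisc v N i s = (\<lambda>x. x + q_pt v N i s) ` disc (v i)"

definition S_set :: "(nat \<Rightarrow> real^3) \<Rightarrow> nat \<Rightarrow> (real^3) set" where
  "S_set v N = frontier (discotope v N) - (\<Union>i<N. bdisc v N i True \<union> bdisc v N i False)"

end

theory Submission
  imports Defs
begin
unbundle cross3_syntax

definition prj :: "real^3 \<Rightarrow> real^3 \<Rightarrow> real^3" where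
  "prj a w = w - ((w \<bullet> a) / (a \<bullet> a)) *\<^sub>R a"
definition pt :: "real^3 \<Rightarrow> real^3 \<Rightarrow> real^3" where
  "pt a w = (norm a / norm (prj a w)) *\<^sub>R prj a w"

lemma prj_orth: "a \<noteq> 0 \<Longrightarrow> prj a w \<bullet> a = 0"
  by (simp add: prj_def inner_diff_left)

lemma prj_dot: "d \<bullet> a = 0 \<Longrightarrow> d \<bullet> prj a w = d \<bullet> w"
  by (simp add: prj_def inner_diff_right)

lemma prj_decomp: "w = prj a w + ((w \<bullet> a) / (a \<bullet> a)) *\<^sub>R a"
  by (simp add: prj_def)

lemma prj_self_dot: "a \<noteq> 0 \<Longrightarrow> prj a w \<bullet> w = prj a w \<bullet> prj a w"
proof -
  assume a: "a \<noteq> 0"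
  have "prj a w \<bullet> w = prj a w \<bullet> (prj a w + ((w \<bullet> a) / (a \<bullet> a)) *\<^sub>R a)"
    using prj_decomp[of w a] by simp
  also have "\<dots> = prj a w \<bullet> prj a w" using prj_orth[OF a, of w]
    by (simp add: inner_add_right)
  finally show ?thesis .
qed

lemma par: "w \<noteq> 0 \<Longrightarrow> x \<times> w = 0 \<Longrightarrow> x = ((x \<bullet> w)/(w \<bullet> w)) *\<^sub>R w"
proof -
  assume w: "w \<noteq> 0" and c: "x \<times> w = 0"
  have "w \<times> (x \<times> w) = (w \<bullet> w) *\<^sub>R x - (w \<bullet> x) *\<^sub>R w" by (rule Lagrange)
  then have "(w \<bullet> w) *\<^sub>R x = (w \<bullet> x) *\<^sub>R w" using c by simp
  then have "x = (1 / (w \<bullet> w)) *\<^sub>R ((w \<bullet> x) *\<^sub>R w)" using w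
    by (metis inner_eq_zero_iff nonzero_divide_eq_eq scaleR_one scaleR_scaleR divide_inverse_commute mult.commute)
  then show ?thesis by (simp add: inner_commute)
qed

lemma prj_zero_iff: "a \<noteq> 0 \<Longrightarrow> prj a w = 0 \<longleftrightarrow> w \<times> a = 0"
proof
  assume a: "a \<noteq> 0" and p: "prj a w = 0"
  then have "w = ((w \<bullet> a) / (a \<bullet> a)) *\<^sub>R a" using prj_decomp[of w a] by simp
  then have "w \<times> a = ((w \<bullet> a) / (a \<bullet> a)) *\<^sub>R (a \<times> a)"
    by (metis cross_mult_left)
  then show "w \<times> a = 0" by simp
next
  assume a: "a \<noteq> 0" and c: "w \<times> a = 0"
  show "prj a w = 0" using par[OF a c] by (simp add: prj_def)
qed

lemma prj_scale: "prj a (c *\<^sub>R w) = c *\<^sub>R prj a w"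
  by (simp add: prj_def algebra_simps)

lemma pt_scale: "c > 0 \<Longrightarrow> pt a (c *\<^sub>R w) = pt a w"
  by (simp add: pt_def prj_scale)

lemma pt_in_disc: "a \<noteq> 0 \<Longrightarrow> prj a w \<noteq> 0 \<Longrightarrow> pt a w \<in> disc a"
  by (simp add: pt_def disc_def prj_orth)

lemma pt_val: "a \<noteq> 0 \<Longrightarrow> prj a w \<noteq> 0 \<Longrightarrow> pt a w \<bullet> w = norm a * norm (prj a w)"
proof -
  assume a: "a \<noteq> 0" and p: "prj a w \<noteq> 0"
  have "pt a w \<bullet> w = (norm a / norm (prj a w)) * (prj a w \<bullet> prj a w)"
    by (simp add: pt_def prj_self_dot[OF a])
  also have "\<dots> = norm a * norm (prj a w)" using p
    by (simp add: power2_norm_eq_inner[symmetric] power2_eq_square)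
  finally show ?thesis .
qed

lemma disc_le: "d \<in> disc a \<Longrightarrow> d \<bullet> w \<le> norm a * norm (prj a w)"
proof -
  assume d: "d \<in> disc a"
  then have "d \<bullet> w = d \<bullet> prj a w" by (simp add: disc_def prj_dot)
  also have "\<dots> \<le> norm d * norm (prj a w)" by (rule norm_cauchy_schwarz)
  also have "\<dots> \<le> norm a * norm (prj a w)" using d
    by (simp add: disc_def mult_right_mono)
  finally show ?thesis .
qed

lemma disc_eq:
  assumes a: "a \<noteq> 0" and p: "prj a w \<noteq> 0" and d: "d \<in> disc a"
    and ge: "norm a * norm (prj a w) \<le> d \<bullet> w"
  shows "d = pt a w"
proof -
  let ?P = "prj a w"
  have dP: "d \<bullet> w = d \<bullet> ?P" using d by (simp add: disc_def prj_dot)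
  have nd: "norm d \<le> norm a" using d by (simp add: disc_def)
  have cs: "d \<bullet> ?P \<le> norm d * norm ?P" by (rule norm_cauchy_schwarz)
  have pos: "norm ?P > 0" using p by simp
  have "norm a * norm ?P \<le> norm d * norm ?P" using ge dP cs by linarith
  then have "norm a \<le> norm d" using pos by simp
  then have nda: "norm d = norm a" using nd by simp
  have "d \<bullet> ?P = norm d * norm ?P" using ge dP cs unfolding nda by linarith
  then have "norm d *\<^sub>R ?P = norm ?P *\<^sub>R d" by (simp add: norm_cauchy_schwarz_eq)
  then have "d = (1 / norm ?P) *\<^sub>R (norm d *\<^sub>R ?P)" using pos by simp
  then show ?thesis using nda by (simp add: pt_def)
qed

lemma pt_eq_cross:
  assumes a: "a \<noteq> 0" and px: "prj a x \<noteq> 0" and py: "prj a y \<noteq> 0" and e: "pt a x = pt a y"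
  shows "(a \<times> x) \<bullet> y = 0"
proof -
  let ?l = "norm (prj a x) / norm (prj a y)"
  have "prj a x = (norm (prj a x) / norm a) *\<^sub>R pt a x" using a px by (simp add: pt_def)
  also have "\<dots> = (norm (prj a x) / norm a) *\<^sub>R pt a y" using e by simp
  also have "\<dots> = ?l *\<^sub>R prj a y" using a py by (simp add: pt_def)
  finally have pxy: "prj a x = ?l *\<^sub>R prj a y" .
  have ax: "a \<times> x = a \<times> prj a x" for x
    by (subst prj_decomp[of x a]) (simp add: cross_add_right cross_mult_right)
  have "(a \<times> x) \<bullet> y = (a \<times> (?l *\<^sub>R prj a y)) \<bullet> y" using ax[of x] pxy by simp
  also have "\<dots> = ?l * ((a \<times> prj a y) \<bullet> y)" by (simp only: cross_mult_right inner_scaleR_left)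
  also have "\<dots> = ?l * ((a \<times> y) \<bullet> y)" using ax[of y] by simp
  finally have "(a \<times> x) \<bullet> y = ?l * ((a \<times> y) \<bullet> y)" .
  then show ?thesis by (simp add: dot_cross_self)
qed

lemma pt_sign:
  assumes n: "n \<noteq> 0" and a: "a \<noteq> 0" and an: "a \<bullet> n = 0" and xn: "x \<bullet> n = 0" and yn: "y \<bullet> n = 0"
    and px: "prj a x \<noteq> 0" and py: "prj a y \<noteq> 0"
    and sg: "(n \<bullet> (a \<times> x)) * (n \<bullet> (a \<times> y)) > 0"
  shows "pt a x = pt a y"
proof -
  define t where "t = a \<times> n"
  have "(norm t)\<^sup>2 = (norm a)\<^sup>2 * (norm n)\<^sup>2" unfolding t_def using norm_cross[of a n] an by simp
  then have t0: "t \<noteq> 0" using a n by auto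
  have ax: "a \<times> z = a \<times> prj a z" for z
    by (subst prj_decomp[of z a]) (simp add: cross_add_right cross_mult_right)
  have rep: "prj a z = ((prj a z \<bullet> t)/(t \<bullet> t)) *\<^sub>R t" if zn: "z \<bullet> n = 0" for z
  proof -
    have "prj a z \<bullet> n = 0" using zn an by (simp add: prj_def inner_diff_left)
    moreover have "prj a z \<bullet> a = 0" using prj_orth[OF a] .
    ultimately have "prj a z \<times> t = 0" unfolding t_def by (simp add: Lagrange)
    then show ?thesis by (rule par[OF t0])
  qed
  define s where "s = (prj a x \<bullet> t)/(t \<bullet> t)"
  define r where "r = (prj a y \<bullet> t)/(t \<bullet> t)"
  have xs: "prj a x = s *\<^sub>R t" using rep[OF xn] s_def by simp
  have yr: "prj a y = r *\<^sub>R t" using rep[OF yn] r_def by simp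
  have "n \<bullet> (a \<times> x) = s * (n \<bullet> (a \<times> t))" using ax[of x] xs by (simp add: cross_mult_right)
  moreover have "n \<bullet> (a \<times> y) = r * (n \<bullet> (a \<times> t))" using ax[of y] yr by (simp add: cross_mult_right)
  ultimately have "s * r * (n \<bullet> (a \<times> t))^2 > 0" using sg by (simp add: power2_eq_square algebra_simps)
  then have sr: "s * r > 0"
    by (metis mult_eq_0_iff not_square_less_zero zero_less_mult_iff linorder_neqE_linordered_idom mult_less_0_iff power2_eq_square)
  have "pt a x = (norm a / (\<bar>s\<bar> * norm t) * s) *\<^sub>R t" using xs by (simp add: pt_def)
  moreover have "pt a y = (norm a / (\<bar>r\<bar> * norm t) * r) *\<^sub>R t" using yr by (simp add: pt_def)
  moreover have "s / \<bar>s\<bar> = r / \<bar>r\<bar>" using sr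
    by (cases "s > 0") (auto simp: zero_less_mult_iff)
  ultimately show ?thesis
    by (metis (no_types, lifting) times_divide_eq_left divide_divide_eq_left mult.commute times_divide_eq_right)
qed

lemma disc_sum_mem: "(\<forall>j\<in>J. y j \<in> disc (v j)) \<Longrightarrow> (\<Sum>j\<in>J. y j) \<in> disc_sum v J"
  by (auto simp: disc_sum_def)

lemma disc_sumE:
  assumes "x \<in> disc_sum v J"
  obtains y where "\<forall>j\<in>J. y j \<in> disc (v j)" "x = (\<Sum>j\<in>J. y j)"
  using assms by (auto simp: disc_sum_def)

lemma disc_sum_empty: "disc_sum v {} = {0}"
  by (auto simp: disc_sum_def)

lemma disc_sum_insert:
  assumes "finite J" "k \<notin> J"
  shows "disc_sum v (insert k J) = {a + b | a b. a \<in> disc (v k) \<and> b \<in> disc_sum v J}"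
proof (intro set_eqI iffI)
  fix x assume "x \<in> disc_sum v (insert k J)"
  then obtain y where y: "\<forall>j\<in>insert k J. y j \<in> disc (v j)" "x = (\<Sum>j\<in>insert k J. y j)"
    by (rule disc_sumE)
  then have "x = y k + (\<Sum>j\<in>J. y j)" using assms by simp
  moreover have "(\<Sum>j\<in>J. y j) \<in> disc_sum v J" using y by (intro disc_sum_mem) auto
  ultimately show "x \<in> {a + b | a b. a \<in> disc (v k) \<and> b \<in> disc_sum v J}" using y by auto
next
  fix x assume "x \<in> {a + b | a b. a \<in> disc (v k) \<and> b \<in> disc_sum v J}"
  then obtain a b where ab: "a \<in> disc (v k)" "b \<in> disc_sum v J" "x = a + b" by auto
  then obtain y where y: "\<forall>j\<in>J. y j \<in> disc (v j)" "b = (\<Sum>j\<in>J. y j)" by (auto elim: disc_sumE)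
  define y' where "y' = y(k := a)"
  have "(\<Sum>j\<in>J. y' j) = (\<Sum>j\<in>J. y j)" using assms unfolding y'_def by (intro sum.cong) auto
  then have "x = (\<Sum>j\<in>insert k J. y' j)" using assms ab y by (simp add: y'_def)
  moreover have "\<forall>j\<in>insert k J. y' j \<in> disc (v j)" using y ab by (auto simp: y'_def)
  ultimately show "x \<in> disc_sum v (insert k J)" by (auto intro: disc_sum_mem)
qed

lemma compact_disc: "compact (disc a)"
proof -
  have "disc a = {x. a \<bullet> x = 0} \<inter> cball 0 (norm a)"
    by (auto simp: disc_def inner_commute)
  then show ?thesis by (simp add: closed_Int_compact closed_hyperplane)
qed

lemma convex_disc: "convex (disc a)"
proof -
  have "disc a = {x. a \<bullet> x = 0} \<inter> cball 0 (norm a)"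
    by (auto simp: disc_def inner_commute)
  then show ?thesis by (simp add: convex_Int convex_hyperplane)
qed

lemma disc_sum_cc: "finite J \<Longrightarrow> compact (disc_sum v J) \<and> convex (disc_sum v J)"
proof (induction J rule: finite_induct)
  case empty
  then show ?case by (simp add: disc_sum_empty)
next
  case (insert k J)
  have e: "{a + b | a b. a \<in> disc (v k) \<and> b \<in> disc_sum v J} = (\<Union>a\<in>disc (v k). \<Union>b\<in>disc_sum v J. {a + b})"
    by auto
  have "compact (disc_sum v (insert k J))" using insert
    by (simp only: disc_sum_insert[OF insert(1,2)]) (intro compact_sums compact_disc, auto)
  moreover have "convex (disc_sum v (insert k J))" using insert
    by (simp only: disc_sum_insert[OF insert(1,2)] e) (intro convex_sums convex_disc, auto)
  ultimately show ?case by simp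
qed

lemma sum_max_in:
  assumes "\<forall>j\<in>J. v j \<noteq> 0 \<and> prj (v j) w \<noteq> 0"
  shows "(\<Sum>j\<in>J. pt (v j) w) \<in> disc_sum v J"
  using assms by (intro disc_sum_mem) (auto intro: pt_in_disc)

lemma sum_max_le:
  assumes "\<forall>j\<in>J. v j \<noteq> 0 \<and> prj (v j) w \<noteq> 0" and "z \<in> disc_sum v J"
  shows "z \<bullet> w \<le> (\<Sum>j\<in>J. pt (v j) w) \<bullet> w"
proof -
  obtain y where y: "\<forall>j\<in>J. y j \<in> disc (v j)" "z = (\<Sum>j\<in>J. y j)" using assms(2) by (rule disc_sumE)
  have "z \<bullet> w = (\<Sum>j\<in>J. y j \<bullet> w)" using y by (simp add: inner_sum_left)
  also have "\<dots> \<le> (\<Sum>j\<in>J. pt (v j) w \<bullet> w)"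
    using y assms(1) by (intro sum_mono) (simp add: pt_val disc_le)
  finally show ?thesis by (simp add: inner_sum_left)
qed

lemma sum_max_eq:
  assumes "finite J" "\<forall>j\<in>J. v j \<noteq> 0 \<and> prj (v j) w \<noteq> 0"
    and y: "\<forall>j\<in>J. y j \<in> disc (v j)" and ge: "(\<Sum>j\<in>J. pt (v j) w) \<bullet> w \<le> (\<Sum>j\<in>J. y j) \<bullet> w"
  shows "\<forall>j\<in>J. y j = pt (v j) w"
proof -
  have nn: "\<forall>j\<in>J. 0 \<le> pt (v j) w \<bullet> w - y j \<bullet> w"
    using y assms(2) by (simp add: pt_val disc_le)
  have "(\<Sum>j\<in>J. pt (v j) w \<bullet> w - y j \<bullet> w) = (\<Sum>j\<in>J. pt (v j) w) \<bullet> w - (\<Sum>j\<in>J. y j) \<bullet> w"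
    by (simp add: inner_sum_left sum_subtractf)
  also have "\<dots> \<le> 0" using ge by simp
  finally have "(\<Sum>j\<in>J. pt (v j) w \<bullet> w - y j \<bullet> w) = 0"
    using nn by (meson antisym sum_nonneg)
  then have "\<forall>j\<in>J. pt (v j) w \<bullet> w - y j \<bullet> w = 0"
    using nn assms(1) by (simp add: sum_nonneg_eq_0_iff)
  then show ?thesis using y assms(2)
    by (metis disc_eq eq_iff_diff_eq_0 order_refl pt_val)
qed


lemma frontier_support:
  fixes K :: "(real^3) set"
  assumes "closed K" "convex K" "x \<in> frontier K"
  obtains w where "w \<noteq> 0" "x \<in> K" "\<forall>z\<in>K. z \<bullet> w \<le> x \<bullet> w"
proof -
  have xK: "x \<in> K" using assms frontier_subset_closed by blast
  show ?thesis
  proof (cases "interior K = {}")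
    case True
    then obtain a b where ab: "a \<noteq> 0" "K \<subseteq> {x. a \<bullet> x = b}"
      using empty_interior_subset_hyperplane[OF assms(2)] by blast
    have "\<forall>z\<in>K. z \<bullet> a \<le> x \<bullet> a"
    proof
      fix z assume "z \<in> K"
      then have "a \<bullet> z = b" "a \<bullet> x = b" using ab xK by auto
      then show "z \<bullet> a \<le> x \<bullet> a" by (simp add: inner_commute)
    qed
    then show ?thesis using ab xK by (intro that[of a]) auto
  next
    case False
    then have "rel_interior K = interior K" by (rule rel_interior_nonempty_interior)
    then have "x \<notin> rel_interior K" using assms(3) by (simp add: frontier_def)
    moreover have "x \<in> closure K" using xK closure_subset by blast
    ultimately obtain a where a: "a \<noteq> 0" "\<And>y. y \<in> closure K \<Longrightarrow> a \<bullet> x \<le> a \<bullet> y"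
      using supporting_hyperplane_relative_frontier[OF assms(2)] by metis
    show ?thesis
    proof (rule that[of "-a"])
      show "-a \<noteq> 0" using a by simp
      show "x \<in> K" by (rule xK)
      show "\<forall>z\<in>K. z \<bullet> -a \<le> x \<bullet> -a" using a(2) closure_subset by (force simp: inner_commute)
    qed
  qed
qed

locale dsetup =
  fixes v :: "nat \<Rightarrow> real^3" and N :: nat
  assumes N2: "N \<ge> 2" and nz: "\<And>i. i < N \<Longrightarrow> v i \<noteq> 0"
    and np: "\<And>i j. i < N \<Longrightarrow> j < N \<Longrightarrow> i \<noteq> j \<Longrightarrow>
           v i /\<^sub>R norm (v i) \<noteq> v j /\<^sub>R norm (v j) \<and>
           v i /\<^sub>R norm (v i) \<noteq> - (v j /\<^sub>R norm (v j))"
begin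

definition sv :: "nat \<Rightarrow> bool \<Rightarrow> real^3" where "sv i s = (if s then v i else - v i)"
definition Q :: "nat \<Rightarrow> bool \<Rightarrow> real^3" where "Q i s = (\<Sum>j\<in>{..<N}-{i}. pt (v j) (sv i s))"
definition Om :: "(real^3) set" where "Om = {w. \<forall>j<N. prj (v j) w \<noteq> 0}"
definition PP :: "real^3 \<Rightarrow> real^3" where "PP w = (\<Sum>j<N. pt (v j) w)"
abbreviation K where "K \<equiv> discotope v N"

lemma cross_nz: "i < N \<Longrightarrow> j < N \<Longrightarrow> i \<noteq> j \<Longrightarrow> v i \<times> v j \<noteq> 0"
proof
  assume ij: "i < N" "j < N" "i \<noteq> j" and c: "v i \<times> v j = 0"
  define c where "c = (v i \<bullet> v j) / (v j \<bullet> v j)"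
  have e: "v i = c *\<^sub>R v j" using par[OF nz[OF ij(2)] c] c_def by simp
  then have c0: "c \<noteq> 0" using nz[OF ij(1)] by auto
  have n: "norm (v i) = \<bar>c\<bar> * norm (v j)" using e by simp
  have vj: "norm (v j) \<noteq> 0" using nz[OF ij(2)] by simp
  show False
  proof (cases "c > 0")
    case True
    then have "v i /\<^sub>R norm (v i) = v j /\<^sub>R norm (v j)" using n e vj by simp
    then show False using np[OF ij] by auto
  next
    case False
    then have "c < 0" using c0 by simp
    then have "v i /\<^sub>R norm (v i) = - (v j /\<^sub>R norm (v j))" using n e vj by simp
    then show False using np[OF ij] by auto
  qed
qed

lemma sv_cross: "sv i s \<times> a = 0 \<longleftrightarrow> v i \<times> a = 0"
  by (simp add: sv_def)

lemma prj_sv_nz: "i < N \<Longrightarrow> j < N \<Longrightarrow> i \<noteq> j \<Longrightarrow> prj (v j) (sv i s) \<noteq> 0"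
  using cross_nz prj_zero_iff nz sv_cross by metis

lemma sv_nz: "i < N \<Longrightarrow> sv i s \<noteq> 0"
  using nz by (simp add: sv_def)

lemma Q_prop:
  assumes i: "i < N"
  shows "Q i s \<in> disc_sum v ({..<N}-{i})"
    "\<forall>z\<in>disc_sum v ({..<N}-{i}). z \<bullet> sv i s \<le> Q i s \<bullet> sv i s"
    "\<And>y. \<forall>j\<in>{..<N}-{i}. y j \<in> disc (v j) \<Longrightarrow> Q i s \<bullet> sv i s \<le> (\<Sum>j\<in>{..<N}-{i}. y j) \<bullet> sv i s
       \<Longrightarrow> \<forall>j\<in>{..<N}-{i}. y j = pt (v j) (sv i s)"
proof -
  have h: "\<forall>j\<in>{..<N}-{i}. v j \<noteq> 0 \<and> prj (v j) (sv i s) \<noteq> 0"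
    using i nz prj_sv_nz by auto
  show "Q i s \<in> disc_sum v ({..<N}-{i})" unfolding Q_def by (rule sum_max_in[OF h])
  show "\<forall>z\<in>disc_sum v ({..<N}-{i}). z \<bullet> sv i s \<le> Q i s \<bullet> sv i s"
    unfolding Q_def using sum_max_le[OF h] by blast
  show "\<And>y. \<forall>j\<in>{..<N}-{i}. y j \<in> disc (v j) \<Longrightarrow> Q i s \<bullet> sv i s \<le> (\<Sum>j\<in>{..<N}-{i}. y j) \<bullet> sv i s
       \<Longrightarrow> \<forall>j\<in>{..<N}-{i}. y j = pt (v j) (sv i s)"
    unfolding Q_def by (rule sum_max_eq[OF _ h]) auto
qed

lemma q_pt_eq: "i < N \<Longrightarrow> q_pt v N i s = Q i s"
proof -
  assume i: "i < N"
  have iff: "(if s then x \<bullet> v i \<le> q \<bullet> v i else q \<bullet> v i \<le> x \<bullet> v i) \<longleftrightarrow> x \<bullet> sv i s \<le> q \<bullet> sv i s" for x q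
    by (cases s) (auto simp: sv_def)
  show ?thesis unfolding q_pt_def iff
  proof (rule the_equality)
    show "Q i s \<in> disc_sum v ({..<N} - {i}) \<and> (\<forall>x\<in>disc_sum v ({..<N} - {i}). x \<bullet> sv i s \<le> Q i s \<bullet> sv i s)"
      using Q_prop[OF i] by blast
  next
    fix q assume q: "q \<in> disc_sum v ({..<N} - {i}) \<and> (\<forall>x\<in>disc_sum v ({..<N} - {i}). x \<bullet> sv i s \<le> q \<bullet> sv i s)"
    then obtain y where y: "\<forall>j\<in>{..<N}-{i}. y j \<in> disc (v j)" "q = (\<Sum>j\<in>{..<N}-{i}. y j)"
      by (auto elim: disc_sumE)
    have "Q i s \<bullet> sv i s \<le> q \<bullet> sv i s" using q Q_prop(1)[OF i] by blast
    then have "\<forall>j\<in>{..<N}-{i}. y j = pt (v j) (sv i s)" using Q_prop(3)[OF i y(1)] y(2) by simp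
    then show "q = Q i s" unfolding Q_def y(2) by (intro sum.cong) auto
  qed
qed

lemma bdisc_eq: "i < N \<Longrightarrow> bdisc v N i s = (\<lambda>x. x + Q i s) ` disc (v i)"
  by (simp add: bdisc_def q_pt_eq)

lemma K_cc: "compact K" "convex K"
  using disc_sum_cc[of "{..<N}" v] by (auto simp: discotope_def)

lemma Om_h: "w \<in> Om \<Longrightarrow> \<forall>j\<in>{..<N}. v j \<noteq> 0 \<and> prj (v j) w \<noteq> 0"
  using nz by (auto simp: Om_def)

lemma PP_in: "w \<in> Om \<Longrightarrow> PP w \<in> K"
  unfolding PP_def discotope_def by (rule sum_max_in[OF Om_h])

lemma PP_le: "w \<in> Om \<Longrightarrow> z \<in> K \<Longrightarrow> z \<bullet> w \<le> PP w \<bullet> w"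
  unfolding PP_def discotope_def by (rule sum_max_le[OF Om_h])

lemma PP_eq: "w \<in> Om \<Longrightarrow> \<forall>j<N. y j \<in> disc (v j) \<Longrightarrow> PP w \<bullet> w \<le> (\<Sum>j<N. y j) \<bullet> w \<Longrightarrow> \<forall>j<N. y j = pt (v j) w"
proof -
  assume w: "w \<in> Om" and y: "\<forall>j<N. y j \<in> disc (v j)" and ge: "PP w \<bullet> w \<le> (\<Sum>j<N. y j) \<bullet> w"
  have "\<forall>j\<in>{..<N}. y j = pt (v j) w"
    by (rule sum_max_eq[OF _ Om_h[OF w]]) (use y ge in \<open>auto simp: PP_def\<close>)
  then show ?thesis by auto
qed

lemma PP_frontier: "w \<in> Om \<Longrightarrow> PP w \<in> frontier K"
proof -
  assume w: "w \<in> Om"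
  have w0: "w \<noteq> 0"
  proof
    assume "w = 0"
    then have "prj (v 0) w = 0" by (simp add: prj_def)
    then show False using w N2 by (auto simp: Om_def)
  qed
  have "PP w \<notin> interior K"
  proof
    assume "PP w \<in> interior K"
    then obtain e where e: "e > 0" "ball (PP w) e \<subseteq> K" using mem_interior by blast
    define z where "z = PP w + (e / 2 / norm w) *\<^sub>R w"
    have "dist (PP w) z < e" using e w0 by (simp add: z_def dist_norm)
    then have "z \<in> K" using e by auto
    then have "z \<bullet> w \<le> PP w \<bullet> w" using PP_le[OF w] by blast
    moreover have "z \<bullet> w = PP w \<bullet> w + (e / 2 / norm w) * (w \<bullet> w)" by (simp add: z_def inner_add_left)
    moreover have "(e / 2 / norm w) * (w \<bullet> w) > 0" using e w0 by simp
    ultimately show False by simp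
  qed
  moreover have "PP w \<in> closure K" using PP_in[OF w] closure_subset by blast
  ultimately show ?thesis by (simp add: frontier_def)
qed


lemma sum_split: "i < N \<Longrightarrow> (\<Sum>j<N. f j) = f i + (\<Sum>j\<in>{..<N}-{i}. f j)"
  by (simp add: sum.remove)

lemma y'_sum: "i < N \<Longrightarrow> (\<Sum>j<N. (if j = i then d else pt (v j) (sv i s))) = d + Q i s"
proof -
  assume i: "i < N"
  have "(\<Sum>j\<in>{..<N}-{i}. (if j = i then d else pt (v j) (sv i s))) = Q i s"
    unfolding Q_def by (intro sum.cong) auto
  then show ?thesis using sum_split[OF i, of "\<lambda>j. if j = i then d else pt (v j) (sv i s)"] by simp
qed

lemma y'_disc: "i < N \<Longrightarrow> d \<in> disc (v i) \<Longrightarrow> \<forall>j<N. (if j = i then d else pt (v j) (sv i s)) \<in> disc (v j)"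
  using pt_in_disc nz prj_sv_nz by auto

lemma frontier_cases:
  assumes x: "x \<in> frontier K"
  shows "(\<exists>w\<in>Om. x = PP w) \<or> (\<exists>i<N. \<exists>s. x \<in> bdisc v N i s)"
proof -
  obtain w where w: "w \<noteq> 0" "x \<in> K" "\<forall>z\<in>K. z \<bullet> w \<le> x \<bullet> w"
    using frontier_support[OF compact_imp_closed[OF K_cc(1)] K_cc(2) x] by blast
  obtain y where y: "\<forall>j\<in>{..<N}. y j \<in> disc (v j)" "x = (\<Sum>j<N. y j)"
    using w(2) unfolding discotope_def by (rule disc_sumE)
  show ?thesis
  proof (cases "w \<in> Om")
    case True
    have "PP w \<bullet> w \<le> (\<Sum>j<N. y j) \<bullet> w" using w PP_in[OF True] y by auto
    then have "\<forall>j<N. y j = pt (v j) w" using PP_eq[OF True] y by auto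
    then have "x = PP w" unfolding y(2) PP_def by (intro sum.cong) auto
    then show ?thesis using True by auto
  next
    case False
    then obtain i where i: "i < N" "prj (v i) w = 0" by (auto simp: Om_def)
    define c where "c = (w \<bullet> v i) / (v i \<bullet> v i)"
    have wc: "w = c *\<^sub>R v i" using prj_decomp[of w "v i"] i c_def by simp
    then have c0: "c \<noteq> 0" using w(1) by auto
    define s where "s = (c > 0)"
    have wsv: "w = \<bar>c\<bar> *\<^sub>R sv i s" using wc c0 by (auto simp: s_def sv_def)
    have sup: "z \<bullet> sv i s \<le> x \<bullet> sv i s" if "z \<in> K" for z
    proof -
      have "\<bar>c\<bar> * (z \<bullet> sv i s) \<le> \<bar>c\<bar> * (x \<bullet> sv i s)" using w(3) that wsv by (metis inner_scaleR_right)
      then show ?thesis using c0 by simp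
    qed
    define y' where "y' = (\<lambda>j. if j = i then y i else pt (v j) (sv i s))"
    have "(\<Sum>j<N. y' j) \<in> K" unfolding discotope_def y'_def
      using y'_disc[OF i(1), of "y i" s] y(1) i by (intro disc_sum_mem) auto
    then have "(\<Sum>j<N. y' j) \<bullet> sv i s \<le> x \<bullet> sv i s" by (rule sup)
    moreover have "(\<Sum>j<N. y' j) = y i + Q i s" unfolding y'_def by (rule y'_sum[OF i(1)])
    moreover have "x = y i + (\<Sum>j\<in>{..<N}-{i}. y j)" using y(2) sum_split[OF i(1)] by simp
    ultimately have "Q i s \<bullet> sv i s \<le> (\<Sum>j\<in>{..<N}-{i}. y j) \<bullet> sv i s" by (simp add: inner_add_left)
    then have "\<forall>j\<in>{..<N}-{i}. y j = pt (v j) (sv i s)" using Q_prop(3)[OF i(1)] y(1) by auto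
    then have "(\<Sum>j\<in>{..<N}-{i}. y j) = Q i s" unfolding Q_def by (intro sum.cong) auto
    then have "x = y i + Q i s" using \<open>x = y i + (\<Sum>j\<in>{..<N}-{i}. y j)\<close> by simp
    then have "x \<in> bdisc v N i s" using bdisc_eq[OF i(1)] y(1) i(1) by auto
    then show ?thesis using i by auto
  qed
qed

lemma bdisc_PP:
  assumes w: "w \<in> Om" and i: "i < N" and b: "PP w \<in> bdisc v N i s"
  shows "w \<times> v i \<noteq> 0" "\<forall>j<N. (w \<times> v i) \<bullet> v j = 0"
proof -
  show "w \<times> v i \<noteq> 0" using w i prj_zero_iff[OF nz[OF i]] by (auto simp: Om_def)
  obtain d where d: "d \<in> disc (v i)" "PP w = d + Q i s" using b bdisc_eq[OF i] by auto
  define y' where "y' = (\<lambda>j. if j = i then d else pt (v j) (sv i s))"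
  have "\<forall>j<N. y' j = pt (v j) w"
  proof (rule PP_eq[OF w])
    show "\<forall>j<N. y' j \<in> disc (v j)" unfolding y'_def by (rule y'_disc[OF i d(1)])
    show "PP w \<bullet> w \<le> (\<Sum>j<N. y' j) \<bullet> w" unfolding y'_def y'_sum[OF i] d(2) by simp
  qed
  show "\<forall>j<N. (w \<times> v i) \<bullet> v j = 0"
  proof (intro allI impI)
    fix j assume j: "j < N"
    show "(w \<times> v i) \<bullet> v j = 0"
    proof (cases "j = i")
      case True
      then show ?thesis by (simp add: dot_cross_self)
    next
      case False
      have "pt (v j) w = pt (v j) (sv i s)" using \<open>\<forall>j<N. y' j = pt (v j) w\<close> j False
        by (auto simp: y'_def)
      then have "(v j \<times> w) \<bullet> sv i s = 0"
        using pt_eq_cross[OF nz[OF j]] w j prj_sv_nz[OF i j False[symmetric]] by (auto simp: Om_def)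
      then have "(v j \<times> w) \<bullet> v i = 0" by (cases s) (auto simp: sv_def)
      then show ?thesis by (metis cross_triple)
    qed
  qed
qed

lemma S_eq: "S_set v N = PP ` Om - (\<Union>i<N. bdisc v N i True \<union> bdisc v N i False)"
proof
  show "S_set v N \<subseteq> PP ` Om - (\<Union>i<N. bdisc v N i True \<union> bdisc v N i False)"
  proof
    fix x assume x: "x \<in> S_set v N"
    then have f: "x \<in> frontier K" and nb: "x \<notin> (\<Union>i<N. bdisc v N i True \<union> bdisc v N i False)"
      by (auto simp: S_set_def)
    have "\<not> (\<exists>i<N. \<exists>s. x \<in> bdisc v N i s)"
    proof
      assume "\<exists>i<N. \<exists>s. x \<in> bdisc v N i s"
      then obtain i s where "i < N" "x \<in> bdisc v N i s" by blast
      then show False using nb by (cases s) auto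
    qed
    then show "x \<in> PP ` Om - (\<Union>i<N. bdisc v N i True \<union> bdisc v N i False)"
      using frontier_cases[OF f] nb by auto
  qed
  show "PP ` Om - (\<Union>i<N. bdisc v N i True \<union> bdisc v N i False) \<subseteq> S_set v N"
    using PP_frontier by (auto simp: S_set_def)
qed


definition planar :: bool where "planar \<longleftrightarrow> (\<exists>n::real^3. n \<noteq> 0 \<and> (\<forall>i<N. n \<bullet> v i = 0))"

lemma nonplanar_S: "\<not> planar \<Longrightarrow> S_set v N = PP ` Om"
proof -
  assume np: "\<not> planar"
  have "PP w \<notin> bdisc v N i s" if "w \<in> Om" "i < N" for w i s
  proof
    assume "PP w \<in> bdisc v N i s"
    from bdisc_PP[OF that this] have "planar" unfolding planar_def by blast
    then show False using np by simp
  qed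
  then show ?thesis unfolding S_eq by blast
qed

lemma Q_pos: "i < N \<Longrightarrow> Q i s \<bullet> sv i s > 0"
proof -
  assume i: "i < N"
  define k where "k = (if i = 0 then 1 else (0::nat))"
  have k: "k < N" "k \<noteq> i" using N2 by (auto simp: k_def)
  have "Q i s \<bullet> sv i s = (\<Sum>j\<in>{..<N}-{i}. pt (v j) (sv i s) \<bullet> sv i s)" by (simp add: Q_def inner_sum_left)
  also have "\<dots> > 0"
  proof (rule sum_pos)
    show "finite ({..<N}-{i})" by simp
    show "{..<N}-{i} \<noteq> {}" using k by auto
    fix j assume j: "j \<in> {..<N}-{i}"
    then have "prj (v j) (sv i s) \<noteq> 0" "v j \<noteq> 0" using prj_sv_nz[OF i] nz by auto
    then show "pt (v j) (sv i s) \<bullet> sv i s > 0" by (simp add: pt_val)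
  qed
  finally show ?thesis .
qed

lemma disc_orth: "d \<in> disc (v i) \<Longrightarrow> d \<bullet> sv i s = 0"
  by (simp add: disc_def sv_def)

lemma bdisc_disjoint:
  assumes np: "\<not> planar" and i: "i < N" and j: "j < N" and ne: "(i, s) \<noteq> (j, t)"
  shows "bdisc v N i s \<inter> bdisc v N j t = {}"
proof (rule ccontr)
  assume "bdisc v N i s \<inter> bdisc v N j t \<noteq> {}"
  then obtain d d' where d: "d \<in> disc (v i)" "d' \<in> disc (v j)" "d + Q i s = d' + Q j t"
    using bdisc_eq[OF i] bdisc_eq[OF j] by auto
  show False
  proof (cases "i = j")
    case True
    then have st: "s \<noteq> t" using ne by simp
    have "(d + Q i s) \<bullet> v i = (d' + Q i t) \<bullet> v i" using d True by simp
    then have e: "Q i s \<bullet> v i = Q i t \<bullet> v i" using d True by (simp add: inner_add_left disc_def)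
    have "Q i True \<bullet> v i > 0" using Q_pos[OF i, of True] by (simp add: sv_def)
    moreover have "Q i False \<bullet> v i < 0" using Q_pos[OF i, of False] by (simp add: sv_def)
    ultimately show False using e st by (cases s; cases t) auto
  next
    case False
    define y2 where "y2 = (\<lambda>k. if k = j then d' else pt (v k) (sv j t))"
    have y2d: "\<forall>k<N. y2 k \<in> disc (v k)" unfolding y2_def by (rule y'_disc[OF j d(2)])
    have sy2: "(\<Sum>k<N. y2 k) = d + Q i s" unfolding y2_def y'_sum[OF j] d(3) ..
    have "(\<Sum>k<N. y2 k) = y2 i + (\<Sum>k\<in>{..<N}-{i}. y2 k)" by (rule sum_split[OF i])
    moreover have "y2 i \<bullet> sv i s = 0" using y2d i disc_orth by blast
    ultimately have "(\<Sum>k\<in>{..<N}-{i}. y2 k) \<bullet> sv i s = Q i s \<bullet> sv i s"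
      using sy2 disc_orth[OF d(1)] by (metis add_0 inner_add_left)
    then have eqs: "\<forall>k\<in>{..<N}-{i}. y2 k = pt (v k) (sv i s)"
      using Q_prop(3)[OF i, of y2] y2d by auto
    have "planar" unfolding planar_def
    proof (intro exI conjI allI impI)
      show "v i \<times> v j \<noteq> 0" using cross_nz[OF i j False] .
      fix k assume k: "k < N"
      show "(v i \<times> v j) \<bullet> v k = 0"
      proof (cases "k = i \<or> k = j")
        case True
        then show ?thesis by (auto simp: dot_cross_self cross_triple)
      next
        case False
        have "y2 k = pt (v k) (sv i s)" using eqs k False by auto
        then have "pt (v k) (sv j t) = pt (v k) (sv i s)" using False by (simp add: y2_def)
        then have "(v k \<times> sv j t) \<bullet> sv i s = 0"
          using pt_eq_cross[OF nz[OF k]] prj_sv_nz k i j False by metis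
        then have "(v k \<times> v j) \<bullet> v i = 0"
          by (cases s; cases t) (auto simp: sv_def cross_mult_right)
        then show ?thesis by (metis cross_triple cross_skew inner_minus_left neg_equal_0_iff_equal)
      qed
    qed
    then show False using np by simp
  qed
qed


definition Fs :: "real^3 \<Rightarrow> (real^3) set" where
  "Fs e = (\<lambda>i. (1 / (v i \<bullet> e)) *\<^sub>R v i) ` {..<N}"

lemma hyp_sub: "{w. e \<bullet> w = 1} - Fs e \<subseteq> Om"
proof
  fix w assume w: "w \<in> {w. e \<bullet> w = 1} - Fs e"
  show "w \<in> Om" unfolding Om_def
  proof (intro CollectI allI impI notI)
    fix j assume j: "j < N" and p: "prj (v j) w = 0"
    define c where "c = (w \<bullet> v j) / (v j \<bullet> v j)"
    have wc: "w = c *\<^sub>R v j" using prj_decomp[of w "v j"] p c_def by simp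
    then have "c * (v j \<bullet> e) = 1" using w by (simp add: inner_commute)
    moreover have "v j \<bullet> e \<noteq> 0" using \<open>c * (v j \<bullet> e) = 1\<close> by auto
    ultimately have "c = 1 / (v j \<bullet> e)" by (simp add: eq_divide_eq mult.commute)
    then have "w \<in> Fs e" using wc j by (auto simp: Fs_def)
    then show False using w by simp
  qed
qed

lemma prj_mult_self: "a \<noteq> 0 \<Longrightarrow> prj a (c *\<^sub>R a) = 0"
  by (simp add: prj_zero_iff cross_mult_left)

lemma piece_eq: "PP ` (Om \<inter> {w. e \<bullet> w > 0}) = PP ` ({w. e \<bullet> w = 1} - Fs e)"
proof
  show "PP ` ({w. e \<bullet> w = 1} - Fs e) \<subseteq> PP ` (Om \<inter> {w. e \<bullet> w > 0})"
  proof (rule image_mono)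
    show "{w. e \<bullet> w = 1} - Fs e \<subseteq> Om \<inter> {w. e \<bullet> w > 0}" using hyp_sub[of e] by auto
  qed
  show "PP ` (Om \<inter> {w. e \<bullet> w > 0}) \<subseteq> PP ` ({w. e \<bullet> w = 1} - Fs e)"
  proof
    fix x assume "x \<in> PP ` (Om \<inter> {w. e \<bullet> w > 0})"
    then obtain w where w: "w \<in> Om" "e \<bullet> w > 0" "x = PP w" by auto
    define c where "c = 1 / (e \<bullet> w)"
    have c: "c > 0" using w by (simp add: c_def)
    have om: "c *\<^sub>R w \<in> Om" using w c by (auto simp: Om_def prj_scale)
    have "e \<bullet> (c *\<^sub>R w) = 1" using w by (simp add: c_def)
    moreover have "c *\<^sub>R w \<notin> Fs e"
    proof
      assume "c *\<^sub>R w \<in> Fs e"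
      then obtain i where "i < N" "c *\<^sub>R w = (1 / (v i \<bullet> e)) *\<^sub>R v i" by (auto simp: Fs_def)
      then have "prj (v i) (c *\<^sub>R w) = 0" using prj_mult_self nz by metis
      then show False using om \<open>i < N\<close> by (auto simp: Om_def)
    qed
    moreover have "PP (c *\<^sub>R w) = PP w" using c by (simp add: PP_def pt_scale)
    ultimately show "x \<in> PP ` ({w. e \<bullet> w = 1} - Fs e)" using w by (metis (mono_tags, lifting) DiffI image_eqI mem_Collect_eq)
  qed
qed

lemma prj_cont: "continuous_on S (prj a)"
proof -
  have "prj a = (\<lambda>w. w - (w \<bullet> a) *\<^sub>R ((1 / (a \<bullet> a)) *\<^sub>R a))"
    by (auto simp: prj_def fun_eq_iff)
  have "continuous_on S (\<lambda>w. w - (w \<bullet> a) *\<^sub>R ((1 / (a \<bullet> a)) *\<^sub>R a))"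
    by (intro continuous_intros)
  then show ?thesis using \<open>prj a = _\<close> by simp
qed

lemma PP_cont: "continuous_on Om PP"
  unfolding PP_def pt_def by (intro continuous_intros prj_cont) (auto simp: Om_def)

lemma piece_conn: "e \<noteq> 0 \<Longrightarrow> connected (PP ` (Om \<inter> {w. e \<bullet> w > 0}))"
proof -
  assume e: "e \<noteq> 0"
  have "\<not> collinear {w. e \<bullet> w = 1}" using e by (simp add: collinear_aff_dim)
  then have "path_connected ({w. e \<bullet> w = 1} - Fs e)"
    by (intro path_connected_convex_diff_countable convex_hyperplane) (auto simp: Fs_def intro: countable_finite)
  then have "connected ({w. e \<bullet> w = 1} - Fs e)" by (rule path_connected_imp_connected)
  then have "connected (PP ` ({w. e \<bullet> w = 1} - Fs e))"
    by (rule connected_continuous_image[OF continuous_on_subset[OF PP_cont hyp_sub]])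
  then show ?thesis by (simp add: piece_eq)
qed

lemma piece_meet:
  assumes e: "e \<noteq> 0" and e': "e' \<noteq> 0" and o: "e \<bullet> e' = 0"
  shows "\<exists>w\<in>Om. e \<bullet> w > 0 \<and> e' \<bullet> w > 0"
proof -
  define f where "f = (\<lambda>t::real. (1 / (e \<bullet> e)) *\<^sub>R e + t *\<^sub>R e')"
  have "\<exists>t\<in>{0<..}. f t \<notin> Fs e"
  proof (rule ccontr)
    assume "\<not> ?thesis"
    then have "f ` {0<..} \<subseteq> Fs e" by auto
    moreover have "finite (Fs e)" by (simp add: Fs_def)
    ultimately have "finite (f ` {0<..})" by (rule finite_subset)
    moreover have "inj_on f {0<..}" using e' by (auto simp: inj_on_def f_def)
    ultimately have "finite {0::real<..}" using finite_imageD by blast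
    then show False using infinite_Ioi by blast
  qed
  then obtain t where t: "t > 0" "f t \<notin> Fs e" by auto
  have ef: "e \<bullet> f t = 1" using e o by (simp add: f_def inner_add_right)
  have "e' \<bullet> f t = t * (e' \<bullet> e')" using o by (simp add: f_def inner_add_right inner_commute)
  then have "e' \<bullet> f t > 0" using t e' by simp
  moreover have "f t \<in> Om" using hyp_sub t ef by auto
  ultimately show ?thesis using ef by force
qed

lemma Om_ne0: "w \<in> Om \<Longrightarrow> w \<noteq> 0"
proof
  assume "w \<in> Om" "w = 0"
  then have "prj (v 0) 0 \<noteq> 0" using N2 by (auto simp: Om_def)
  then show False by (simp add: prj_def)
qed

lemma PP_conn: "connected (PP ` Om)"
proof -
  define A where "A e = PP ` (Om \<inter> {w. e \<bullet> w > 0})" for e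
  define a1 where "a1 = (axis 1 1 :: real^3)"
  define a2 where "a2 = (axis 2 1 :: real^3)"
  define a3 where "a3 = (axis 3 1 :: real^3)"
  have nz': "a1 \<noteq> 0" "a2 \<noteq> 0" "a3 \<noteq> 0" "-a1 \<noteq> 0" "-a2 \<noteq> 0" "-a3 \<noteq> 0"
    by (auto simp: a1_def a2_def a3_def axis_eq_0_iff)
  have orth: "a1 \<bullet> a2 = 0" "a1 \<bullet> a3 = 0" "a1 \<bullet> -a2 = 0" "a1 \<bullet> -a3 = 0" "-a1 \<bullet> a2 = 0"
    by (auto simp: a1_def a2_def a3_def inner_axis_axis)
  have step: "connected (X \<union> A e')" if X: "connected X" "A e \<subseteq> X" and e: "e \<noteq> 0" "e' \<noteq> 0" "e \<bullet> e' = 0" for X e e'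
  proof (rule connected_Un[OF X(1)])
    show "connected (A e')" unfolding A_def by (rule piece_conn[OF e(2)])
    obtain w where "w \<in> Om" "e \<bullet> w > 0" "e' \<bullet> w > 0" using piece_meet[OF e] by blast
    then have "PP w \<in> A e" "PP w \<in> A e'" by (auto simp: A_def)
    then show "X \<inter> A e' \<noteq> {}" using X(2) by blast
  qed
  have c0: "connected (A a1)" unfolding A_def by (rule piece_conn[OF nz'(1)])
  have c1: "connected (A a1 \<union> A a2)" by (rule step[OF c0 order_refl nz'(1,2) orth(1)])
  have c2: "connected ((A a1 \<union> A a2) \<union> A (-a2))" by (rule step[OF c1 _ nz'(1,5) orth(3)]) auto
  have c3: "connected ((A a1 \<union> A a2 \<union> A (-a2)) \<union> A a3)" by (rule step[OF c2 _ nz'(1,3) orth(2)]) auto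
  have c4: "connected ((A a1 \<union> A a2 \<union> A (-a2) \<union> A a3) \<union> A (-a3))" by (rule step[OF c3 _ nz'(1,6) orth(4)]) auto
  have c5: "connected ((A a1 \<union> A a2 \<union> A (-a2) \<union> A a3 \<union> A (-a3)) \<union> A (-a1))"
    by (rule step[OF c4 _ nz'(2,4)]) (use orth(5) in \<open>auto simp: inner_commute\<close>)
  have "PP ` Om = A a1 \<union> A a2 \<union> A (-a2) \<union> A a3 \<union> A (-a3) \<union> A (-a1)"
  proof
    show "A a1 \<union> A a2 \<union> A (-a2) \<union> A a3 \<union> A (-a3) \<union> A (-a1) \<subseteq> PP ` Om" by (auto simp: A_def)
    show "PP ` Om \<subseteq> A a1 \<union> A a2 \<union> A (-a2) \<union> A a3 \<union> A (-a3) \<union> A (-a1)"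
    proof
      fix x assume "x \<in> PP ` Om"
      then obtain w where w: "w \<in> Om" "x = PP w" by auto
      have "w \<noteq> 0" by (rule Om_ne0[OF w(1)])
      then have "w $ 1 \<noteq> 0 \<or> w $ 2 \<noteq> 0 \<or> w $ 3 \<noteq> 0" by (auto simp: vec_eq_iff forall_3)
      moreover have "a1 \<bullet> w = w $ 1" "a2 \<bullet> w = w $ 2" "a3 \<bullet> w = w $ 3"
        by (auto simp: a1_def a2_def a3_def inner_axis')
      ultimately have "a1 \<bullet> w > 0 \<or> -a1 \<bullet> w > 0 \<or> a2 \<bullet> w > 0 \<or> -a2 \<bullet> w > 0 \<or> a3 \<bullet> w > 0 \<or> -a3 \<bullet> w > 0"
        by auto
      then show "x \<in> A a1 \<union> A a2 \<union> A (-a2) \<union> A a3 \<union> A (-a3) \<union> A (-a1)"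
        using w by (auto simp: A_def)
    qed
  qed
  then show ?thesis using c5 by simp
qed

lemma Om_ne: "Om \<noteq> {}"
proof -
  obtain w where "w \<in> Om" "axis 1 1 \<bullet> w > (0::real)" "axis 2 1 \<bullet> w > (0::real)"
    using piece_meet[of "axis 1 1 :: real^3" "axis 2 1"] by (auto simp: axis_eq_0_iff inner_axis_axis)
  then show ?thesis by auto
qed


lemma nPP:
  assumes n: "\<forall>k<N. n \<bullet> v k = 0" and nw: "n \<bullet> w \<noteq> 0"
  shows "w \<in> Om" "\<exists>c>0. n \<bullet> PP w = c * (n \<bullet> w)"
proof -
  show om: "w \<in> Om" unfolding Om_def
  proof (intro CollectI allI impI notI)
    fix j assume j: "j < N" and p: "prj (v j) w = 0"
    then have "w = ((w \<bullet> v j) / (v j \<bullet> v j)) *\<^sub>R v j" using prj_decomp[of w "v j"] by simp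
    then have "n \<bullet> w = ((w \<bullet> v j) / (v j \<bullet> v j)) * (n \<bullet> v j)" by (metis inner_scaleR_right)
    then show False using n j nw by simp
  qed
  have t: "n \<bullet> pt (v j) w = (norm (v j) / norm (prj (v j) w)) * (n \<bullet> w)" if j: "j < N" for j
    using n j by (simp add: pt_def prj_def inner_diff_right)
  have "n \<bullet> PP w = (\<Sum>j<N. norm (v j) / norm (prj (v j) w)) * (n \<bullet> w)"
    by (simp add: PP_def inner_sum_right t sum_distrib_right)
  moreover have "(\<Sum>j<N. norm (v j) / norm (prj (v j) w)) > 0"
  proof (rule sum_pos)
    show "finite {..<N}" by simp
    show "{..<N} \<noteq> {}" using N2 by (auto simp: lessThan_empty_iff)
    fix j assume "j \<in> {..<N}"
    then show "norm (v j) / norm (prj (v j) w) > 0" using om nz by (auto simp: Om_def)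
  qed
  ultimately show "\<exists>c>0. n \<bullet> PP w = c * (n \<bullet> w)" by blast
qed

lemma par_cross: "w \<noteq> 0 \<Longrightarrow> x \<times> w = 0 \<Longrightarrow> \<exists>c. x = c *\<^sub>R w"
  using par by blast

lemma off_equator_nb:
  assumes n0: "n \<noteq> 0" and n: "\<forall>k<N. n \<bullet> v k = 0" and nw: "n \<bullet> w \<noteq> 0" and i: "i < N"
  shows "PP w \<notin> bdisc v N i s"
proof
  assume b: "PP w \<in> bdisc v N i s"
  have om: "w \<in> Om" using nPP[OF n nw] by simp
  define m where "m = w \<times> v i"
  have m0: "m \<noteq> 0" and mv: "\<forall>j<N. m \<bullet> v j = 0" using bdisc_PP[OF om i b] by (auto simp: m_def)
  define j where "j = (if i = 0 then 1 else (0::nat))"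
  have j: "j < N" "j \<noteq> i" using N2 by (auto simp: j_def)
  define t where "t = v i \<times> v j"
  have t0: "t \<noteq> 0" using cross_nz[OF i j(1) j(2)[symmetric]] by (simp add: t_def)
  have "n \<times> t = 0" using n i j by (simp add: t_def Lagrange)
  then obtain \<alpha> where al: "n = \<alpha> *\<^sub>R t" using par_cross[OF t0] by blast
  have "m \<times> t = 0" using mv i j by (simp add: t_def Lagrange)
  then obtain \<beta> where be: "m = \<beta> *\<^sub>R t" using par_cross[OF t0] by blast
  have "m \<bullet> w = 0" by (simp add: m_def dot_cross_self)
  then have "\<beta> * (t \<bullet> w) = 0" using be by simp
  moreover have "\<beta> \<noteq> 0" using m0 be by auto
  ultimately have "t \<bullet> w = 0" by simp
  then have "n \<bullet> w = 0" using al by simp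
  then show False using nw by simp
qed

lemma key_identity:
  assumes "n \<bullet> w = 0"
  shows "(n \<bullet> (x \<times> y)) * (w \<bullet> w) = (x \<bullet> w) * (y \<bullet> (n \<times> w)) - (x \<bullet> (n \<times> w)) * (y \<bullet> w)"
proof -
  have "w \<times> (n \<times> w) = (w \<bullet> w) *\<^sub>R n" using assms by (simp add: Lagrange inner_commute)
  then have "(x \<times> y) \<bullet> (w \<times> (n \<times> w)) = (n \<bullet> (x \<times> y)) * (w \<bullet> w)" by (simp add: inner_commute)
  moreover have "(x \<times> y) \<bullet> (w \<times> (n \<times> w)) = (x \<bullet> w) * (y \<bullet> (n \<times> w)) - (x \<bullet> (n \<times> w)) * (y \<bullet> w)"
    by (rule dot_cross)
  ultimately show ?thesis by simp
qed

lemma equator_b: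
  assumes n0: "n \<noteq> 0" and n: "\<forall>k<N. n \<bullet> v k = 0" and om: "w \<in> Om" and nw: "n \<bullet> w = 0"
  shows "\<exists>i<N. \<exists>s. PP w \<in> bdisc v N i s"
proof -
  define f where "f = n \<times> w"
  have w0: "w \<noteq> 0" by (rule Om_ne0[OF om])
  have ww: "w \<bullet> w > 0" using w0 by simp
  have fn: "f \<times> n = (n \<bullet> n) *\<^sub>R w"
  proof -
    have "f \<times> n = - (n \<times> f)" by (metis cross_skew)
    also have "\<dots> = (n \<bullet> n) *\<^sub>R w" using nw by (simp add: f_def Lagrange)
    finally show ?thesis .
  qed
  have vf: "v k \<bullet> f \<noteq> 0" if k: "k < N" for k
  proof
    assume vf0: "v k \<bullet> f = 0"
    have "v k \<times> (f \<times> n) = 0" using vf0 n k by (simp add: Lagrange inner_commute)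
    then have "(n \<bullet> n) *\<^sub>R (v k \<times> w) = 0" using fn by (simp add: cross_mult_right)
    then have "v k \<times> w = 0" using n0 by simp
    then have "w \<times> v k = 0" by (metis cross_skew neg_equal_0_iff_equal)
    then have "prj (v k) w = 0" using prj_zero_iff[OF nz[OF k]] by simp
    then show False using om k by (auto simp: Om_def)
  qed
  define sg where "sg k = (v k \<bullet> f > 0)" for k
  define c where "c k = sv k (sg k)" for k
  have cf: "c k \<bullet> f > 0" if "k < N" for k
    using vf[OF that] by (auto simp: c_def sv_def sg_def)
  define r where "r k = (c k \<bullet> w) / (c k \<bullet> f)" for k
  define M where "M = Max (r ` {..<N})"
  have fin: "finite (r ` {..<N})" "r ` {..<N} \<noteq> {}" using N2 by (auto simp: lessThan_empty_iff)
  have "M \<in> r ` {..<N}" unfolding M_def by (rule Max_in[OF fin])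
  then obtain i where i: "i < N" "r i = M" by (metis imageE lessThan_iff)
  have rle: "r k \<le> r i" if "k < N" for k using i fin that by (auto simp: M_def)
  have prod: "(c k \<bullet> w) * (c i \<bullet> f) \<le> (c i \<bullet> w) * (c k \<bullet> f)" if k: "k < N" for k
  proof -
    have "(c k \<bullet> w) / (c k \<bullet> f) \<le> (c i \<bullet> w) / (c i \<bullet> f)" using rle[OF k] by (simp add: r_def)
    then show ?thesis using cf[OF k] cf[OF i(1)] by (simp add: field_simps)
  qed
  have cn: "n \<bullet> c k = 0" if "k < N" for k using n that by (simp add: c_def sv_def)
  have eqpt: "pt (v j) w = pt (v j) (c i)" if j: "j < N" "j \<noteq> i" for j
  proof -
    have cjw: "n \<bullet> (c j \<times> w) < 0"
    proof -
      have "(n \<bullet> (c j \<times> w)) * (w \<bullet> w) = (c j \<bullet> w) * (w \<bullet> f) - (c j \<bullet> f) * (w \<bullet> w)"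
        using key_identity[OF nw] f_def by simp
      also have "w \<bullet> f = 0" by (simp add: f_def dot_cross_self)
      finally have "(n \<bullet> (c j \<times> w)) * (w \<bullet> w) = - (c j \<bullet> f) * (w \<bullet> w)" by simp
      then have "(n \<bullet> (c j \<times> w) + c j \<bullet> f) * (w \<bullet> w) = 0" by (simp add: algebra_simps)
      then have "n \<bullet> (c j \<times> w) + c j \<bullet> f = 0" using ww by simp
      then have "n \<bullet> (c j \<times> w) = - (c j \<bullet> f)" by linarith
      then show ?thesis using cf[OF j(1)] by simp
    qed
    have cjci: "n \<bullet> (c j \<times> c i) < 0"
    proof -
      have "(n \<bullet> (c j \<times> c i)) * (w \<bullet> w) = (c j \<bullet> w) * (c i \<bullet> f) - (c j \<bullet> f) * (c i \<bullet> w)"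
        using key_identity[OF nw] f_def by simp
      also have "\<dots> \<le> 0" using prod[OF j(1)] by (simp add: mult.commute)
      finally have le: "n \<bullet> (c j \<times> c i) \<le> 0" using ww by (simp add: mult_le_0_iff)
      have "n \<bullet> (c j \<times> c i) \<noteq> 0"
      proof
        assume z: "n \<bullet> (c j \<times> c i) = 0"
        have t0: "c j \<times> c i \<noteq> 0" using cross_nz[OF j(1) i(1) j(2)]
          by (cases "sg i"; cases "sg j") (auto simp: c_def sv_def)
        have "n \<times> (c j \<times> c i) = 0" using cn[OF j(1)] cn[OF i(1)] by (simp add: Lagrange)
        then obtain \<alpha> where al: "n = \<alpha> *\<^sub>R (c j \<times> c i)" using par_cross[OF t0] by blast
        then have "\<alpha> * ((c j \<times> c i) \<bullet> (c j \<times> c i)) = 0" using z by (simp add: inner_commute)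
        then have "\<alpha> = 0" using t0 by simp
        then show False using al n0 by simp
      qed
      then show ?thesis using le by simp
    qed
    have vjs: "(n \<bullet> (v j \<times> w)) * (n \<bullet> (v j \<times> c i)) = (n \<bullet> (c j \<times> w)) * (n \<bullet> (c j \<times> c i))"
      by (cases "sg j") (auto simp: c_def sv_def)
    have pos: "(n \<bullet> (v j \<times> w)) * (n \<bullet> (v j \<times> c i)) > 0"
      unfolding vjs using cjw cjci by (simp add: mult_neg_neg)
    show ?thesis
    proof (rule pt_sign[OF n0 nz[OF j(1)]])
      show "v j \<bullet> n = 0" using n j by (simp add: inner_commute)
      show "w \<bullet> n = 0" using nw by (simp add: inner_commute)
      show "c i \<bullet> n = 0" using cn[OF i(1)] by (simp add: inner_commute)
      show "prj (v j) w \<noteq> 0" using om j by (auto simp: Om_def)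
      show "prj (v j) (c i) \<noteq> 0" unfolding c_def by (rule prj_sv_nz[OF i(1) j(1) j(2)[symmetric]])
      show "(n \<bullet> (v j \<times> w)) * (n \<bullet> (v j \<times> c i)) > 0" by (rule pos)
    qed
  qed
  have "PP w = pt (v i) w + (\<Sum>j\<in>{..<N}-{i}. pt (v j) w)" unfolding PP_def by (rule sum_split[OF i(1)])
  also have "(\<Sum>j\<in>{..<N}-{i}. pt (v j) w) = Q i (sg i)"
    unfolding Q_def using eqpt by (intro sum.cong) (auto simp: c_def)
  finally have "PP w = pt (v i) w + Q i (sg i)" .
  moreover have "pt (v i) w \<in> disc (v i)" using om i nz by (intro pt_in_disc) (auto simp: Om_def)
  ultimately have "PP w \<in> bdisc v N i (sg i)" using bdisc_eq[OF i(1)] by auto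
  then show ?thesis using i by blast
qed


lemma planar_S:
  assumes n0: "n \<noteq> 0" and n: "\<forall>k<N. n \<bullet> v k = 0"
  shows "S_set v N = PP ` {w. n \<bullet> w > 0} \<union> PP ` {w. n \<bullet> w < 0}"
proof
  show "S_set v N \<subseteq> PP ` {w. n \<bullet> w > 0} \<union> PP ` {w. n \<bullet> w < 0}"
  proof
    fix x assume "x \<in> S_set v N"
    then obtain w where w: "w \<in> Om" "x = PP w" and nb: "x \<notin> (\<Union>i<N. bdisc v N i True \<union> bdisc v N i False)"
      unfolding S_eq by auto
    have "n \<bullet> w \<noteq> 0"
    proof
      assume "n \<bullet> w = 0"
      then obtain i s where "i < N" "PP w \<in> bdisc v N i s" using equator_b[OF n0 n w(1)] by blast
      then show False using nb w by (cases s) auto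
    qed
    then have "n \<bullet> w > 0 \<or> n \<bullet> w < 0" by linarith
    then show "x \<in> PP ` {w. n \<bullet> w > 0} \<union> PP ` {w. n \<bullet> w < 0}" using w by blast
  qed
  show "PP ` {w. n \<bullet> w > 0} \<union> PP ` {w. n \<bullet> w < 0} \<subseteq> S_set v N"
  proof
    fix x assume "x \<in> PP ` {w. n \<bullet> w > 0} \<union> PP ` {w. n \<bullet> w < 0}"
    then have "\<exists>w. n \<bullet> w \<noteq> 0 \<and> x = PP w" by (elim UnE imageE) force+
    then obtain w where w: "n \<bullet> w \<noteq> 0" "x = PP w" by blast
    have "w \<in> Om" using nPP[OF n w(1)] by simp
    moreover have "x \<notin> (\<Union>i<N. bdisc v N i True \<union> bdisc v N i False)"
      using off_equator_nb[OF n0 n w(1)] w(2) by auto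
    ultimately show "x \<in> S_set v N" unfolding S_eq using w by auto
  qed
qed

lemma half_conn: "n \<noteq> 0 \<Longrightarrow> \<forall>k<N. n \<bullet> v k = 0 \<Longrightarrow> connected (PP ` {w. n \<bullet> w > 0})"
proof -
  assume n0: "n \<noteq> 0" and n: "\<forall>k<N. n \<bullet> v k = 0"
  have sub: "{w. n \<bullet> w > 0} \<subseteq> Om"
  proof
    fix w assume "w \<in> {w. n \<bullet> w > 0}"
    then have "n \<bullet> w \<noteq> 0" by simp
    then show "w \<in> Om" by (rule nPP(1)[OF n])
  qed
  show ?thesis
    by (rule connected_continuous_image[OF continuous_on_subset[OF PP_cont sub]])
      (simp add: convex_connected convex_halfspace_gt)
qed

end

lemma comp_max:
  assumes that: "D \<noteq> {}" "A \<subseteq> D" "D \<subseteq> S" "connected D"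
    and SAB: "S = A \<union> B" and ne: "A \<noteq> {}" and o: "open U" "open V" "U \<inter> V = {}" and sub: "A \<subseteq> U" "B \<subseteq> V"
  shows "D = A"
proof -
  have "D \<subseteq> U \<union> V" using that SAB sub by blast
  then have "U \<inter> D = {} \<or> V \<inter> D = {}" using connectedD[OF that(4) o(1,2)] o(3) by blast
  moreover have "U \<inter> D \<noteq> {}" using ne sub that by blast
  ultimately have "D \<subseteq> U" using \<open>D \<subseteq> U \<union> V\<close> by blast
  then show "D = A" using that SAB sub o(3) by blast
qed

lemma comp2:
  fixes S :: "'a::topological_space set"
  assumes SAB: "S = A \<union> B" and ne: "A \<noteq> {}" "B \<noteq> {}" and c: "connected A" "connected B"
    and o: "open U" "open V" "U \<inter> V = {}" and sub: "A \<subseteq> U" "B \<subseteq> V"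
  shows "card (components S) = 2"
proof -
  have SBA: "S = B \<union> A" using SAB by blast
  have o': "V \<inter> U = {}" using o by blast
  have mA: "D = A" if "D \<noteq> {}" "A \<subseteq> D" "D \<subseteq> S" "connected D" for D
    using comp_max[OF that SAB ne(1) o sub] .
  have mB: "D = B" if "D \<noteq> {}" "B \<subseteq> D" "D \<subseteq> S" "connected D" for D
    using comp_max[OF that SBA ne(2) o(2,1) o' sub(2,1)] .
  have AS: "A \<subseteq> S" "B \<subseteq> S" using SAB by auto
  have A: "A \<in> components S" unfolding in_components_maximal
  proof (intro conjI allI impI)
    show "A \<noteq> {}" "A \<subseteq> S" "connected A" by (fact ne(1), fact AS(1), fact c(1))
    fix D assume "D \<noteq> {} \<and> A \<subseteq> D \<and> D \<subseteq> S \<and> connected D"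
    then show "D = A" using mA by blast
  qed
  have B: "B \<in> components S" unfolding in_components_maximal
  proof (intro conjI allI impI)
    show "B \<noteq> {}" "B \<subseteq> S" "connected B" by (fact ne(2), fact AS(2), fact c(2))
    fix D assume "D \<noteq> {} \<and> B \<subseteq> D \<and> D \<subseteq> S \<and> connected D"
    then show "D = B" using mB by blast
  qed
  have "components S = {A, B}"
  proof
    show "{A, B} \<subseteq> components S" using A B by simp
    show "components S \<subseteq> {A, B}"
    proof
      fix C assume C: "C \<in> components S"
      then have Cp: "C \<noteq> {}" "C \<subseteq> S" by (auto simp: in_components_maximal)
      then obtain x where x: "x \<in> C" by auto
      then have "x \<in> A \<or> x \<in> B" using Cp SAB by auto
      then have "C \<inter> A \<noteq> {} \<or> C \<inter> B \<noteq> {}" using x by auto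
      then have "C = A \<or> C = B" using components_nonoverlap[OF C A] components_nonoverlap[OF C B] by auto
      then show "C \<in> {A, B}" by simp
    qed
  qed
  moreover have "A \<noteq> B" using ne sub o(3) by auto
  ultimately show ?thesis by simp
qed

theorem mainTheorem18:
  fixes v :: "nat \<Rightarrow> real^3" and N :: nat
  assumes "N \<ge> 2"
    and "\<And>i. i < N \<Longrightarrow> v i \<noteq> 0"
    and "\<And>i j. i < N \<Longrightarrow> j < N \<Longrightarrow> i \<noteq> j \<Longrightarrow>
           v i /\<^sub>R norm (v i) \<noteq> v j /\<^sub>R norm (v j) \<and>
           v i /\<^sub>R norm (v i) \<noteq> - (v j /\<^sub>R norm (v j))"
  shows "(card (components (S_set v N)) = 2 \<longleftrightarrow>
            (\<exists>n::real^3. n \<noteq> 0 \<and> (\<forall>i<N. n \<bullet> v i = 0)))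
       \<and> (\<not> (\<exists>n::real^3. n \<noteq> 0 \<and> (\<forall>i<N. n \<bullet> v i = 0)) \<longrightarrow>
            connected (S_set v N) \<and>
            (\<forall>i<N. \<forall>j<N. \<forall>s t. (i, s) \<noteq> (j, t) \<longrightarrow>
                bdisc v N i s \<inter> bdisc v N j t = {}))"
proof -
  have ds: "dsetup v N"
  proof
    show "2 \<le> N" by (rule assms(1))
    show "\<And>i. i < N \<Longrightarrow> v i \<noteq> 0" by (rule assms(2))
    show "\<And>i j. i < N \<Longrightarrow> j < N \<Longrightarrow> i \<noteq> j \<Longrightarrow>
           v i /\<^sub>R norm (v i) \<noteq> v j /\<^sub>R norm (v j) \<and>
           v i /\<^sub>R norm (v i) \<noteq> - (v j /\<^sub>R norm (v j))" by (rule assms(3))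
  qed
  interpret dsetup v N by (rule ds)
  have nonpl: "connected (S_set v N) \<and> S_set v N \<noteq> {}" if np: "\<not> planar"
    using nonplanar_S[OF np] PP_conn Om_ne by simp
  have pl: "card (components (S_set v N)) = 2" if pl: "planar"
  proof -
    obtain n where n0: "n \<noteq> 0" and n: "\<forall>k<N. n \<bullet> v k = 0" using pl unfolding planar_def by blast
    define A where "A = PP ` {w. n \<bullet> w > 0}"
    define B where "B = PP ` {w. n \<bullet> w < 0}"
    have SAB: "S_set v N = A \<union> B" unfolding A_def B_def by (rule planar_S[OF n0 n])
    have "n \<bullet> n > 0" using n0 by simp
    then have "PP n \<in> A" unfolding A_def by blast
    then have nA: "A \<noteq> {}" by blast
    have "(-n) \<bullet> (-n) > 0" using n0 by simp
    then have "n \<bullet> (-n) < 0" by simp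
    then have "PP (-n) \<in> B" unfolding B_def by blast
    then have nB: "B \<noteq> {}" by blast
    have cA: "connected A" unfolding A_def by (rule half_conn[OF n0 n])
    have n0': "-n \<noteq> 0" using n0 by simp
    have n': "\<forall>k<N. (-n) \<bullet> v k = 0" using n by simp
    have eq: "{w. (-n) \<bullet> w > 0} = {w. n \<bullet> w < 0}" by auto
    have cB: "connected B" unfolding B_def using half_conn[OF n0' n'] unfolding eq .
    have oU: "open {x. n \<bullet> x > (0::real)}" by (rule open_halfspace_gt)
    have oV: "open {x. n \<bullet> x < (0::real)}" by (rule open_halfspace_lt)
    have UV: "{x. n \<bullet> x > (0::real)} \<inter> {x. n \<bullet> x < 0} = {}" by auto
    have sA: "A \<subseteq> {x. n \<bullet> x > 0}"
    proof
      fix x assume "x \<in> A"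
      then obtain w where w: "n \<bullet> w > 0" "x = PP w" unfolding A_def by blast
      then have "n \<bullet> w \<noteq> 0" by simp
      then obtain c where "c > 0" "n \<bullet> PP w = c * (n \<bullet> w)" using nPP(2)[OF n] by blast
      then show "x \<in> {x. n \<bullet> x > 0}" using w by simp
    qed
    have sB: "B \<subseteq> {x. n \<bullet> x < 0}"
    proof
      fix x assume "x \<in> B"
      then obtain w where w: "n \<bullet> w < 0" "x = PP w" unfolding B_def by blast
      then have "n \<bullet> w \<noteq> 0" by simp
      then obtain c where "c > 0" "n \<bullet> PP w = c * (n \<bullet> w)" using nPP(2)[OF n] by blast
      then show "x \<in> {x. n \<bullet> x < 0}" using w by (simp add: mult_pos_neg)
    qed
    show ?thesis by (rule comp2[OF SAB nA nB cA cB oU oV UV sA sB])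
  qed
  have np1: "card (components (S_set v N)) = 1" if np: "\<not> planar"
  proof -
    have "components (S_set v N) = {S_set v N}" using nonpl[OF np] by (simp add: components_eq_sing_iff)
    then show ?thesis by simp
  qed
  have iff: "card (components (S_set v N)) = 2 \<longleftrightarrow> planar"
  proof
    assume c2: "card (components (S_set v N)) = 2"
    show planar
    proof (rule ccontr)
      assume "\<not> planar"
      then have "card (components (S_set v N)) = 1" by (rule np1)
      then show False using c2 by simp
    qed
  next
    assume planar
    then show "card (components (S_set v N)) = 2" by (rule pl)
  qed
  have part2: "connected (S_set v N) \<and> (\<forall>i<N. \<forall>j<N. \<forall>s t. (i, s) \<noteq> (j, t) \<longrightarrow>
                bdisc v N i s \<inter> bdisc v N j t = {})" if np: "\<not> planar"
  proof
    show "connected (S_set v N)" using nonpl[OF np] by (rule conjunct1)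
    show "\<forall>i<N. \<forall>j<N. \<forall>s t. (i, s) \<noteq> (j, t) \<longrightarrow> bdisc v N i s \<inter> bdisc v N j t = {}"
    proof (intro allI impI)
      fix i j :: nat and s t :: bool assume "i < N" "j < N" "(i, s) \<noteq> (j, t)"
      then show "bdisc v N i s \<inter> bdisc v N j t = {}" by (rule bdisc_disjoint[OF np])
    qed
  qed
  have pd: "planar = (\<exists>n::real^3. n \<noteq> 0 \<and> (\<forall>i<N. n \<bullet> v i = 0))" by (rule planar_def)
  show ?thesis using iff part2 unfolding pd by blast
qed

end
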